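(* Let $(U(n))_{n\geqslant 0}$ be an arithmetic progression of positive integers, $U(n)=U(0)+nd$ with $d$ an integer, and let $l$ be a positive integer. (i) Let $S(n)$ be the right-concatenation $\overline{U(0)U(1)\cdots U(n)}$. Then for every $n\geqslant 0$ such that $U(n+1)$, $U(n+2)$, $U(n+3)$ all have exactly $l$ decimal digits, $$S(n+3) - (10^l+2)\, S(n+2) + (2\cdot 10^l + 1)\, S(n+1) - 10^l\, S(n) = 0.$$ (ii) Let $S(n)$ be the left-concatenation $\overline{U(n)U(n-1)\cdots U(0)}$. Then for every $n\geqslant 0$ such that $U(n+1)$, $U(n+2)$, $U(n+3)$ all have exactly $l$ decimal digits, $$S(n+3) - (2\cdot 10^l + 1)\, S(n+2) + (10^{2l}+2\cdot 10^l)\, S(n+1) - 10^{2l}\, S(n) = 0.$$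
   Context: For positive integers $a_0,\ldots,a_k$, $\overline{a_0a_1\cdots a_k}$ denotes the integer whose decimal expansion is the decimal expansion of $a_0$ followed by that of $a_1$, ..., followed by that of $a_k$. Thus for the right-concatenation $S(n+1)=S(n)\cdot 10^{k}+U(n+1)$ with $k$ the number of digits of $U(n+1)$, and for the left-concatenation $S(n+1)=U(n+1)\cdot 10^{p}+S(n)$ with $p$ the number of digits of $S(n)$. *)

theory Defs
  imports Main
begin

text \<open>Number of decimal digits of a natural number (with the convention 0 has 1 digit;
  only applied to positive integers below).\<close>
fun ndigits_nat :: "nat \<Rightarrow> nat" where
  "ndigits_nat m = (if m < 10 then 1 else Suc (ndigits_nat (m div 10)))"

definition ndigits :: "int \<Rightarrow> nat" where
  "ndigits x = ndigits_nat (nat x)"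

fun rconcat :: "(nat \<Rightarrow> int) \<Rightarrow> nat \<Rightarrow> int" where
  "rconcat U 0 = U 0"
| "rconcat U (Suc n) = rconcat U n * 10 ^ ndigits (U (Suc n)) + U (Suc n)"

fun lconcat :: "(nat \<Rightarrow> int) \<Rightarrow> nat \<Rightarrow> int" where
  "lconcat U 0 = U 0"
| "lconcat U (Suc n) = U (Suc n) * 10 ^ ndigits (lconcat U n) + lconcat U n"

end

theory Submission
  imports Defs
begin

declare ndigits_nat.simps[simp del]

lemma nd_pos: "ndigits_nat m \<ge> 1"
  by (subst ndigits_nat.simps) auto

lemma nd_upper: "m < 10 ^ ndigits_nat m"
proof (induction m rule: ndigits_nat.induct)
  case (1 m)
  show ?case
  proof (cases "m < 10")
    case True then show ?thesis by (subst ndigits_nat.simps) simp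
  next
    case False
    then have "m div 10 < 10 ^ ndigits_nat (m div 10)" using 1 by simp
    moreover have "m = 10 * (m div 10) + m mod 10" by simp
    moreover have "m mod 10 < 10" by simp
    ultimately have "m < 10 * 10 ^ ndigits_nat (m div 10)" by linarith
    then show ?thesis using False by (subst ndigits_nat.simps) simp
  qed
qed

lemma nd_lower: "m > 0 \<Longrightarrow> 10 ^ (ndigits_nat m - 1) \<le> m"
proof (induction m rule: ndigits_nat.induct)
  case (1 m)
  show ?case
  proof (cases "m < 10")
    case True then show ?thesis using 1(2) by (subst ndigits_nat.simps) simp
  next
    case False
    then have "10 ^ (ndigits_nat (m div 10) - 1) \<le> m div 10" using 1 by simp
    moreover have "ndigits_nat (m div 10) \<ge> 1" by (rule nd_pos)
    moreover have "10 * (m div 10) \<le> m" by simp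
    ultimately have "10 * 10 ^ (ndigits_nat (m div 10) - 1) \<le> m" by linarith
    then have "10 ^ ndigits_nat (m div 10) \<le> m"
      using \<open>ndigits_nat (m div 10) \<ge> 1\<close>
      by (cases "ndigits_nat (m div 10)") auto
    then show ?thesis using False by (subst ndigits_nat.simps) simp
  qed
qed

lemma nd_char: "k \<ge> 1 \<Longrightarrow> 10 ^ (k - 1) \<le> m \<Longrightarrow> m < 10 ^ k \<Longrightarrow> ndigits_nat m = k"
proof -
  assume a: "k \<ge> 1" "10 ^ (k - 1) \<le> m" "m < 10 ^ k"
  have m0: "m > 0" using a(2) by (metis gr0I le_zero_eq power_not_zero zero_neq_numeral)
  have u: "m < 10 ^ ndigits_nat m" by (rule nd_upper)
  have lo: "10 ^ (ndigits_nat m - 1) \<le> m" using m0 by (rule nd_lower)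
  have "ndigits_nat m \<le> k"
  proof (rule ccontr)
    assume "\<not> ?thesis"
    then have "k \<le> ndigits_nat m - 1" by simp
    then have "(10::nat) ^ k \<le> 10 ^ (ndigits_nat m - 1)" by (rule power_increasing) simp
    then show False using lo a(3) by linarith
  qed
  moreover have "k \<le> ndigits_nat m"
  proof (rule ccontr)
    assume "\<not> ?thesis"
    then have "ndigits_nat m \<le> k - 1" by simp
    then have "(10::nat) ^ ndigits_nat m \<le> 10 ^ (k - 1)" by (rule power_increasing) simp
    then show False using u a(2) by linarith
  qed
  ultimately show ?thesis by simp
qed

lemma nd_concat_nat:
  assumes "a > 0" "b < 10 ^ p"
  shows "ndigits_nat (a * 10 ^ p + b) = ndigits_nat a + p"
proof (rule nd_char)
  let ?k = "ndigits_nat a"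
  have k1: "?k \<ge> 1" by (rule nd_pos)
  show "1 \<le> ?k + p" using k1 by simp
  have "10 ^ (?k + p - 1) = 10 ^ (?k - 1) * (10::nat) ^ p"
    using k1 by (simp add: power_add[symmetric])
  also have "\<dots> \<le> a * 10 ^ p" using nd_lower[OF assms(1)] by simp
  finally show "10 ^ (?k + p - 1) \<le> a * 10 ^ p + b" by linarith
  have "a + 1 \<le> 10 ^ ?k" using nd_upper[of a] by simp
  then have "(a + 1) * 10 ^ p \<le> 10 ^ ?k * (10::nat) ^ p" by (rule mult_right_mono) simp
  then show "a * 10 ^ p + b < 10 ^ (?k + p)" using assms(2)
    by (simp add: power_add algebra_simps)
qed

lemma nd_concat:
  assumes "(a::int) > 0" "b \<ge> 0" "b < 10 ^ p"
  shows "ndigits (a * 10 ^ p + b) = ndigits a + p"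
proof -
  have "nat (a * 10 ^ p + b) = nat a * 10 ^ p + nat b"
    using assms by (simp add: nat_add_distrib nat_mult_distrib nat_power_eq)
  moreover have "nat b < 10 ^ p"
  proof -
    have "int (nat b) < int (10 ^ p)" using assms by simp
    then show ?thesis by linarith
  qed
  ultimately show ?thesis unfolding ndigits_def using assms(1)
    by (simp add: nd_concat_nat)
qed

lemma nd_bound:
  assumes "(b::int) \<ge> 0"
  shows "b < 10 ^ ndigits b"
proof -
  have "nat b < 10 ^ ndigits b" unfolding ndigits_def by (rule nd_upper)
  then have "int (nat b) < int (10 ^ ndigits b)" by linarith
  then show ?thesis using assms by simp
qed

lemma lconcat_pos: "\<forall>n. U n > 0 \<Longrightarrow> lconcat U n > 0"
  by (induction n) (auto simp: add_pos_pos)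

theorem lemma2:
  fixes U :: "nat \<Rightarrow> int" and d :: int and l :: nat
  assumes pos: "\<forall>n. U n > 0"
    and ap: "\<forall>n. U n = U 0 + int n * d"
    and l: "l > 0"
  shows "(\<forall>n. ndigits (U (n+1)) = l \<and> ndigits (U (n+2)) = l \<and> ndigits (U (n+3)) = l \<longrightarrow>
            rconcat U (n+3) - (10^l + 2) * rconcat U (n+2) + (2 * 10^l + 1) * rconcat U (n+1)
              - 10^l * rconcat U n = 0)
       \<and> (\<forall>n. ndigits (U (n+1)) = l \<and> ndigits (U (n+2)) = l \<and> ndigits (U (n+3)) = l \<longrightarrow>
            lconcat U (n+3) - (2 * 10^l + 1) * lconcat U (n+2) + (10^(2*l) + 2 * 10^l) * lconcat U (n+1)
              - 10^(2*l) * lconcat U n = 0)"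
proof (intro conjI allI impI)
  have apn: "U (n+3) - 2 * U (n+2) + U (n+1) = 0" for n
    using ap[rule_format, of "n+3"] ap[rule_format, of "n+2"] ap[rule_format, of "n+1"]
    by (simp add: algebra_simps)
  {
    fix n
    assume h: "ndigits (U (n+1)) = l \<and> ndigits (U (n+2)) = l \<and> ndigits (U (n+3)) = l"
    have e: "rconcat U (n+3) = rconcat U (n+2) * 10^l + U (n+3)"
            "rconcat U (n+2) = rconcat U (n+1) * 10^l + U (n+2)"
            "rconcat U (n+1) = rconcat U n * 10^l + U (n+1)"
      using h by (simp_all add: numeral_3_eq_3 numeral_2_eq_2)
    show "rconcat U (n+3) - (10^l + 2) * rconcat U (n+2) + (2 * 10^l + 1) * rconcat U (n+1)
              - 10^l * rconcat U n = 0"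
      unfolding e(1) unfolding e(2) unfolding e(3) using apn
      by (simp add: algebra_simps)
  }
  {
    fix n
    assume h: "ndigits (U (n+1)) = l \<and> ndigits (U (n+2)) = l \<and> ndigits (U (n+3)) = l"
    define p where "p = ndigits (lconcat U n)"
    define Y :: int where "Y = 10 ^ p"
    define X :: int where "X = 10 ^ l"
    have s0: "lconcat U n > 0" by (rule lconcat_pos[OF pos])
    have s1: "lconcat U (n+1) = U (n+1) * Y + lconcat U n" by (simp add: Y_def p_def)
    have p1: "ndigits (lconcat U (n+1)) = l + p"
      unfolding s1 Y_def p_def using h pos s0 nd_bound[of "lconcat U n"]
      by (subst nd_concat) auto
    have s1p: "lconcat U (n+1) > 0" by (rule lconcat_pos[OF pos])
    have s2: "lconcat U (n+2) = U (n+2) * (X * Y) + lconcat U (n+1)"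
      using p1 by (simp add: numeral_2_eq_2 X_def Y_def power_add)
    have p2: "ndigits (lconcat U (n+2)) = l + (l + p)"
      using p1 h pos s1p nd_bound[of "lconcat U (n+1)"]
      by (simp add: numeral_2_eq_2 nd_concat)
    have s3: "lconcat U (n+3) = U (n+3) * (X * X * Y) + lconcat U (n+2)"
      using p2 by (simp add: numeral_3_eq_3 X_def Y_def power_add)
    have x2: "(10::int)^(2*l) = X * X" by (simp add: X_def mult_2 power_add)
    have "lconcat U (n+3) - (2 * X + 1) * lconcat U (n+2) + (X * X + 2 * X) * lconcat U (n+1)
              - X * X * lconcat U n = X * X * Y * (U (n+3) - 2 * U (n+2) + U (n+1))"
      unfolding s3 s2 s1 by (simp add: algebra_simps)
    also have "\<dots> = 0" using apn by simp
    finally show "lconcat U (n+3) - (2 * 10^l + 1) * lconcat U (n+2) + (10^(2*l) + 2 * 10^l) * lconcat U (n+1)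
              - 10^(2*l) * lconcat U n = 0" unfolding x2 X_def .
  }
qed

end
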